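(* Let $\mathcal{I}$ be an instance of the Square Strip Packing Problem, consider the bottom-left packing for an ordering attaining $h_{\text{BL}}^{\text{worst}}(\mathcal{I})$, let $h_{\text{BL}}$ be its height, and let $g\ge 0$ be a constant and $f$ the number such that the unoccupied space of this packing within the substrip $[0,W]\times[0,h_{\text{BL}}-g\,h_{\text{max}}]$ can be covered by $f$ copies of the squares of the instance (a union of translates in which each square of $\mathcal{I}$ is used at most $f$ times). Then $$\frac{h_{\text{BL}}^{\text{worst}}(\mathcal{I})}{h_{\text{OPT}}(\mathcal{I})}\ \le\ f+g+1 .$$
   Context: Square Strip Packing Problem: squares with side lengths at most $W$ are to be packed without rotation into the strip $[0,W]\times[0,\infty)$ with pairwise disjoint interiors; the height of a packing is the maximum top coordinate of a square, and $h_{\text{OPT}}(\mathcal{I})$ is the minimum height of a feasible packing. Bottom-left algorithm: given an ordering, place the first square at $(0,0)$ and each subsequent square at a feasible position $(x,y)$ (lower-left corner) with $(y,x)$ lexicographically minimal. $h_{\text{BL}}^{\text{worst}}(\mathcal{I})$ is the maximum over all orderings of the height of the bottom-left packing. $h_{\text{max}}$ is the largest side length of a square in $\mathcal{I}$. *)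

theory Defs
  imports Complex_Main
begin

definition closed_sq :: "real \<times> real \<Rightarrow> real \<Rightarrow> (real \<times> real) set" where
  "closed_sq p a = {fst p .. fst p + a} \<times> {snd p .. snd p + a}"

definition open_sq :: "real \<times> real \<Rightarrow> real \<Rightarrow> (real \<times> real) set" where
  "open_sq p a = {fst p <..< fst p + a} \<times> {snd p <..< snd p + a}"

definition valid_instance :: "real \<Rightarrow> nat \<Rightarrow> (nat \<Rightarrow> real) \<Rightarrow> bool" where
  "valid_instance W n s \<longleftrightarrow> 0 < W \<and> (\<forall>i<n. 0 < s i \<and> s i \<le> W)"

definition h_max :: "nat \<Rightarrow> (nat \<Rightarrow> real) \<Rightarrow> real" where
  "h_max n s = Max (s ` {..<n})"

definition in_strip :: "real \<Rightarrow> real \<times> real \<Rightarrow> real \<Rightarrow> bool" where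
  "in_strip W p a \<longleftrightarrow> 0 \<le> fst p \<and> fst p + a \<le> W \<and> 0 \<le> snd p"

definition feasible_packing :: "real \<Rightarrow> nat \<Rightarrow> (nat \<Rightarrow> real) \<Rightarrow> (nat \<Rightarrow> real \<times> real) \<Rightarrow> bool" where
  "feasible_packing W n s pos \<longleftrightarrow>
     (\<forall>i<n. in_strip W (pos i) (s i)) \<and>
     (\<forall>i<n. \<forall>j<n. i \<noteq> j \<longrightarrow> open_sq (pos i) (s i) \<inter> open_sq (pos j) (s j) = {})"

definition packing_height :: "nat \<Rightarrow> (nat \<Rightarrow> real) \<Rightarrow> (nat \<Rightarrow> real \<times> real) \<Rightarrow> real" where
  "packing_height n s pos = (if n = 0 then 0 else Max ((\<lambda>i. snd (pos i) + s i) ` {..<n}))"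

definition h_OPT :: "real \<Rightarrow> nat \<Rightarrow> (nat \<Rightarrow> real) \<Rightarrow> real" where
  "h_OPT W n s = Inf {packing_height n s pos | pos. feasible_packing W n s pos}"

definition feasible_pos :: "real \<Rightarrow> ((real \<times> real) \<times> real) set \<Rightarrow> real \<Rightarrow> real \<times> real \<Rightarrow> bool" where
  "feasible_pos W P a q \<longleftrightarrow> in_strip W q a \<and> (\<forall>(p, b) \<in> P. open_sq q a \<inter> open_sq p b = {})"

definition yx_lex_le :: "real \<times> real \<Rightarrow> real \<times> real \<Rightarrow> bool" where
  "yx_lex_le q r \<longleftrightarrow> snd q < snd r \<or> (snd q = snd r \<and> fst q \<le> fst r)"

text \<open>An ordering is a permutation \<sigma> of {..<n}: \<sigma> k is the k-th square placed.
  pos is the bottom-left packing for \<sigma> if each square \<sigma> k is placed at the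
  (y,x)-lexicographically minimal feasible position given the squares \<sigma> 0 .. \<sigma> (k-1).\<close>
definition is_ordering :: "nat \<Rightarrow> (nat \<Rightarrow> nat) \<Rightarrow> bool" where
  "is_ordering n \<sigma> \<longleftrightarrow> bij_betw \<sigma> {..<n} {..<n}"

definition is_BL_packing :: "real \<Rightarrow> nat \<Rightarrow> (nat \<Rightarrow> real) \<Rightarrow> (nat \<Rightarrow> nat) \<Rightarrow> (nat \<Rightarrow> real \<times> real) \<Rightarrow> bool" where
  "is_BL_packing W n s \<sigma> pos \<longleftrightarrow>
     (\<forall>k<n. let P = {(pos (\<sigma> j), s (\<sigma> j)) | j. j < k} in
        feasible_pos W P (s (\<sigma> k)) (pos (\<sigma> k)) \<and>
        (\<forall>q. feasible_pos W P (s (\<sigma> k)) q \<longrightarrow> yx_lex_le (pos (\<sigma> k)) q))"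

definition h_BL_worst :: "real \<Rightarrow> nat \<Rightarrow> (nat \<Rightarrow> real) \<Rightarrow> real" where
  "h_BL_worst W n s = Sup {packing_height n s pos | \<sigma> pos. is_ordering n \<sigma> \<and> is_BL_packing W n s \<sigma> pos}"

definition unoccupied :: "real \<Rightarrow> real \<Rightarrow> nat \<Rightarrow> (nat \<Rightarrow> real) \<Rightarrow> (nat \<Rightarrow> real \<times> real) \<Rightarrow> (real \<times> real) set" where
  "unoccupied W H n s pos = ({0..W} \<times> {0..H}) - (\<Union>i<n. closed_sq (pos i) (s i))"

definition covered_by_copies :: "nat \<Rightarrow> nat \<Rightarrow> (nat \<Rightarrow> real) \<Rightarrow> (real \<times> real) set \<Rightarrow> bool" where
  "covered_by_copies f n s U \<longleftrightarrow>
     (\<exists>T :: nat \<Rightarrow> (real \<times> real) set.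
        (\<forall>i<n. finite (T i) \<and> card (T i) \<le> f) \<and>
        U \<subseteq> (\<Union>i<n. \<Union>t\<in>T i. closed_sq t (s i)))"

end

theory Submission imports Defs "HOL-Analysis.Analysis" begin

lemma closed_sq_cbox: "closed_sq p a = cbox p (fst p + a, snd p + a)"
  by (cases p) (simp add: closed_sq_def cbox_Pair_eq)

lemma open_sq_box: "open_sq p a = box p (fst p + a, snd p + a)"
  by (cases p) (auto simp: open_sq_def box_def Basis_prod_def)

lemma measure_closed_sq: "0 \<le> a \<Longrightarrow> measure lborel (closed_sq p a) = a\<^sup>2"
  by (cases p) (simp add: inner_Pair closed_sq_cbox measure_lborel_cbox_eq Basis_prod_def power2_eq_square)

lemma measure_open_sq: "0 \<le> a \<Longrightarrow> measure lborel (open_sq p a) = a\<^sup>2"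
  by (cases p) (simp add: inner_Pair open_sq_box measure_lborel_box_eq Basis_prod_def power2_eq_square)

lemma fm_closed_sq[simp]: "closed_sq p a \<in> fmeasurable lborel"
  by (simp add: closed_sq_cbox)

lemma fm_open_sq[simp]: "open_sq p a \<in> fmeasurable lborel"
  by (simp add: open_sq_box)

lemma open_sq_sets[simp]: "open_sq p a \<in> sets borel"
  using fm_open_sq[of p a] by (simp add: fmeasurable_def)

lemma open_sq_fin[simp]: "emeasure lborel (open_sq p a) \<noteq> top"
  using fm_open_sq[of p a] by (simp add: fmeasurable_def)

lemma closed_sq_sets[simp]: "closed_sq p a \<in> sets borel"
  using fm_closed_sq[of p a] by (simp add: fmeasurable_def)

lemma height_ge:
  assumes "i < n" shows "snd (pos i) + s i \<le> packing_height n s pos"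
  using assms unfolding packing_height_def by (auto intro: Max_ge)

lemma area_bound:
  assumes vi: "valid_instance W n s" and n: "0 < n" and fp: "feasible_packing W n s pos"
  shows "(\<Sum>i<n. (s i)\<^sup>2) \<le> W * packing_height n s pos"
proof -
  let ?H = "packing_height n s pos"
  have sp: "\<And>i. i < n \<Longrightarrow> 0 < s i" using vi by (auto simp: valid_instance_def)
  have strip: "\<And>i. i < n \<Longrightarrow> in_strip W (pos i) (s i)" using fp by (auto simp: feasible_packing_def)
  have "0 \<le> ?H" using height_ge[of 0 n pos s] n sp[of 0] strip[of 0] by (auto simp: in_strip_def)
  have W: "0 < W" using vi by (auto simp: valid_instance_def)
  have disj: "disjoint_family_on (\<lambda>i. open_sq (pos i) (s i)) {..<n}"
    using fp by (auto simp: feasible_packing_def disjoint_family_on_def)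
  have "measure lborel (\<Union>i\<in>{..<n}. open_sq (pos i) (s i)) = (\<Sum>i<n. measure lborel (open_sq (pos i) (s i)))"
    by (rule measure_finite_Union) (auto simp: disj fmeasurable_def)
  also have "\<dots> = (\<Sum>i<n. (s i)\<^sup>2)"
    using sp by (intro sum.cong) (auto simp: measure_open_sq less_imp_le)
  finally have eq: "measure lborel (\<Union>i\<in>{..<n}. open_sq (pos i) (s i)) = (\<Sum>i<n. (s i)\<^sup>2)" .
  have sub: "(\<Union>i\<in>{..<n}. open_sq (pos i) (s i)) \<subseteq> box (0,0) (W, ?H)"
  proof
    fix z assume "z \<in> (\<Union>i\<in>{..<n}. open_sq (pos i) (s i))"
    then obtain i where i: "i < n" "z \<in> open_sq (pos i) (s i)" by auto
    have "snd (pos i) + s i \<le> ?H" using height_ge[OF i(1)] .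
    with strip[OF i(1)] i(2) show "z \<in> box (0,0) (W, ?H)"
      by (cases z) (auto simp: open_sq_def in_strip_def box_def Basis_prod_def inner_Pair)
  qed
  have "measure lborel (\<Union>i\<in>{..<n}. open_sq (pos i) (s i)) \<le> measure lborel (box (0,0) (W, ?H) :: (real\<times>real) set)"
    by (rule measure_mono_fmeasurable[OF sub]) auto
  also have "\<dots> = W * ?H"
    using W \<open>0 \<le> ?H\<close> by (simp add: measure_lborel_box_eq Basis_prod_def inner_Pair)
  finally show ?thesis using eq by simp
qed

lemma BL_feasible:
  assumes o: "is_ordering n \<sigma>" and bl: "is_BL_packing W n s \<sigma> pos"
  shows "feasible_packing W n s pos"
proof -
  have surj: "\<And>i. i < n \<Longrightarrow> \<exists>k<n. \<sigma> k = i"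
    using o unfolding is_ordering_def bij_betw_def by (metis imageE lessThan_iff)
  have fk: "\<And>k. k < n \<Longrightarrow> feasible_pos W {(pos (\<sigma> j), s (\<sigma> j)) | j. j < k} (s (\<sigma> k)) (pos (\<sigma> k))"
    using bl unfolding is_BL_packing_def Let_def by blast
  have A: "open_sq (pos (\<sigma> k)) (s (\<sigma> k)) \<inter> open_sq (pos (\<sigma> l)) (s (\<sigma> l)) = {}"
    if "l < k" "k < n" for k l
    using fk[OF that(2)] that(1) unfolding feasible_pos_def by blast
  show ?thesis unfolding feasible_packing_def
  proof (intro conjI allI impI)
    fix i assume "i < n"
    then obtain k where "k < n" "\<sigma> k = i" using surj by blast
    then show "in_strip W (pos i) (s i)" using fk[of k] by (auto simp: feasible_pos_def)
  next
    fix i j assume ij: "i < n" "j < n" "i \<noteq> j"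
    obtain k where k: "k < n" "\<sigma> k = i" using surj ij by blast
    obtain l where l: "l < n" "\<sigma> l = j" using surj ij by blast
    have "k \<noteq> l" using k l ij by auto
    then consider "l < k" | "k < l" by linarith
    then show "open_sq (pos i) (s i) \<inter> open_sq (pos j) (s j) = {}"
    proof cases
      case 1 then show ?thesis using A[of l k] k l by simp
    next
      case 2 then show ?thesis using A[of k l] k l by (simp add: Int_commute)
    qed
  qed
qed

lemma cover_bound:
  assumes vi: "valid_instance W n s" and Y: "0 \<le> Y"
    and cov: "covered_by_copies f n s (unoccupied W Y n s pos)"
  shows "W * Y \<le> (real f + 1) * (\<Sum>i<n. (s i)\<^sup>2)"
proof -
  have sp: "\<And>i. i < n \<Longrightarrow> 0 < s i" using vi by (auto simp: valid_instance_def)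
  have W: "0 < W" using vi by (auto simp: valid_instance_def)
  obtain T where T: "\<And>i. i < n \<Longrightarrow> finite (T i) \<and> card (T i) \<le> f"
    and U: "unoccupied W Y n s pos \<subseteq> (\<Union>i<n. \<Union>t\<in>T i. closed_sq t (s i))"
    using cov unfolding covered_by_copies_def by blast
  define A where "A = (\<Union>i\<in>{..<n}. closed_sq (pos i) (s i))"
  define B where "B = (\<Union>p\<in>Sigma {..<n} T. closed_sq (snd p) (s (fst p)))"
  have finS: "finite (Sigma {..<n} T)" using T by (intro finite_SigmaI) auto
  have Bdef2: "(\<Union>i<n. \<Union>t\<in>T i. closed_sq t (s i)) = B" unfolding B_def by force
  have sub: "cbox (0,0) (W, Y) \<subseteq> A \<union> B"
    using U unfolding Bdef2 A_def unoccupied_def by (auto simp: cbox_Pair_eq)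
  have Af: "A \<in> fmeasurable lborel" unfolding A_def
    by (intro fmeasurable.finite_UN) auto
  have Bf: "B \<in> fmeasurable lborel" unfolding B_def
    using finS by (intro fmeasurable.finite_UN) auto
  have "W * Y = measure lborel (cbox (0,0) (W, Y) :: (real\<times>real) set)"
    using W Y by (simp add: measure_lborel_cbox_eq Basis_prod_def inner_Pair)
  also have "\<dots> \<le> measure lborel (A \<union> B)"
    by (rule measure_mono_fmeasurable[OF sub]) (use Af Bf in auto)
  also have "\<dots> \<le> measure lborel A + measure lborel B"
    using Af Bf by (intro measure_Un_le) auto
  also have "measure lborel A \<le> (\<Sum>i<n. measure lborel (closed_sq (pos i) (s i)))"
    unfolding A_def by (intro measure_UNION_le) auto
  also have "\<dots> = (\<Sum>i<n. (s i)\<^sup>2)"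
    using sp by (intro sum.cong) (auto simp: measure_closed_sq less_imp_le)
  also have "measure lborel B \<le> (\<Sum>p\<in>Sigma {..<n} T. measure lborel (closed_sq (snd p) (s (fst p))))"
    unfolding B_def using finS by (intro measure_UNION_le) auto
  also have "\<dots> = (\<Sum>i<n. \<Sum>t\<in>T i. measure lborel (closed_sq t (s i)))"
    by (subst sum.Sigma) (use T in \<open>auto simp: case_prod_beta\<close>)
  also have "\<dots> = (\<Sum>i<n. real (card (T i)) * (s i)\<^sup>2)"
    using sp by (intro sum.cong) (auto simp: measure_closed_sq less_imp_le)
  also have "\<dots> \<le> (\<Sum>i<n. real f * (s i)\<^sup>2)"
    using T by (intro sum_mono mult_right_mono) auto
  finally show ?thesis by (simp add: sum_distrib_left algebra_simps sum.distrib)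
qed

theorem theorem14:
  fixes W :: real and n :: nat and s :: "nat \<Rightarrow> real"
    and \<sigma> :: "nat \<Rightarrow> nat" and pos :: "nat \<Rightarrow> real \<times> real"
    and g :: real and f :: nat
  assumes "valid_instance W n s"
    and "0 < n"
    and "is_ordering n \<sigma>"
    and "is_BL_packing W n s \<sigma> pos"
    and "packing_height n s pos = h_BL_worst W n s"
    and "0 \<le> g"
    and "covered_by_copies f n s
           (unoccupied W (packing_height n s pos - g * h_max n s) n s pos)"
  shows "h_BL_worst W n s / h_OPT W n s \<le> real f + g + 1"
proof -
  note vi = assms(1) and n = assms(2)
  define H where "H = packing_height n s pos"
  define h where "h = h_max n s"
  define Ho where "Ho = h_OPT W n s"
  define S where "S = (\<Sum>i<n. (s i)\<^sup>2)"
  have W: "0 < W" using vi by (auto simp: valid_instance_def)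
  have sp: "\<And>i. i < n \<Longrightarrow> 0 < s i" using vi by (auto simp: valid_instance_def)
  have fp: "feasible_packing W n s pos" using BL_feasible assms(3,4) .
  obtain i0 where i0: "i0 < n" "h = s i0"
    using n unfolding h_def h_max_def
    by (metis (no_types, lifting) Max_in finite_imageI finite_lessThan imageE image_is_empty lessThan_empty_iff lessThan_iff not_less0)
  have hpos: "0 < h" using sp i0 by auto
  have bnd: "h \<le> x \<and> S \<le> W * x" if xin: "x \<in> {packing_height n s p | p. feasible_packing W n s p}" for x
  proof -
    obtain p where x: "x = packing_height n s p" and fq: "feasible_packing W n s p" using xin by blast
    have "snd (p i0) + s i0 \<le> x" using height_ge[OF i0(1)] x by simp
    moreover have "0 \<le> snd (p i0)" using fq i0 by (auto simp: feasible_packing_def in_strip_def)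
    ultimately have "h \<le> x" using i0 by simp
    moreover have "S \<le> W * x" unfolding S_def x using area_bound[OF vi n fq] .
    ultimately show ?thesis by simp
  qed
  have ne: "{packing_height n s p | p. feasible_packing W n s p} \<noteq> {}" using fp by blast
  have hO: "h \<le> Ho" unfolding Ho_def h_OPT_def
    by (rule cInf_greatest[OF ne]) (use bnd in blast)
  have "S / W \<le> Ho" unfolding Ho_def h_OPT_def
    by (rule cInf_greatest[OF ne]) (use bnd W in \<open>auto simp: pos_divide_le_eq mult.commute\<close>)
  then have SO: "S \<le> W * Ho" using W by (simp add: pos_divide_le_eq mult.commute)
  have Opos: "0 < Ho" using hO hpos by simp
  have key: "H \<le> (real f + g + 1) * Ho"
  proof (cases "0 \<le> H - g * h")
    case True
    have "W * (H - g * h) \<le> (real f + 1) * S"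
      using cover_bound[OF vi True] assms(7) unfolding H_def h_def S_def by simp
    also have "\<dots> \<le> (real f + 1) * (W * Ho)" using SO by (intro mult_left_mono) auto
    finally have "W * (H - g * h) \<le> W * ((real f + 1) * Ho)" by (simp add: algebra_simps)
    then have "H - g * h \<le> (real f + 1) * Ho" using W by simp
    moreover have "g * h \<le> g * Ho" using hO assms(6) by (intro mult_left_mono)
    ultimately show ?thesis by (simp add: algebra_simps)
  next
    case False
    then have "H < g * h" by simp
    also have "\<dots> \<le> g * Ho" using hO assms(6) by (intro mult_left_mono)
    also have "\<dots> \<le> (real f + g + 1) * Ho" using Opos by (intro mult_right_mono) auto
    finally show ?thesis by simp
  qed
  show ?thesis using key Opos assms(5) unfolding H_def Ho_def
    by (simp add: pos_divide_le_eq)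
qed

end
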